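(* Let $\mathcal{S}$ be a space of geometric source conditions and $\mathcal{Z}$ the space of molecular configurations, and let $C:\mathcal{S}\times\mathcal{Z}\to\mathcal{Z}$ be a function. Suppose that, for every rigid transformation $G$ (rotations and translations of 3D space, acting on the coordinate parts of configurations and on source conditions), $C$ is invariant in its first argument, i.e. $C(G\mathbf{s},\mathbf{z})=C(\mathbf{s},\mathbf{z})$, and equivariant in its second argument, i.e. $C(\mathbf{s},G\mathbf{z})=G\,C(\mathbf{s},\mathbf{z})$, for all $\mathbf{s}\in\mathcal{S}$, $\mathbf{z}\in\mathcal{Z}$. Define $\mathbf{v}=\mathbf{z}-C(\mathbf{s},\mathbf{z})$. Then the gradient $\nabla_{\mathbf{z}}\lVert\mathbf{v}\rVert_2^2=\nabla_{\mathbf{z}}\lVert\mathbf{z}-C(\mathbf{s},\mathbf{z})\rVert_2^2$ is equivariant to (such rigid) transformations of $\mathbf{z}$.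
   Context: A configuration of $N$ nodes (atoms or residues) is $\mathbf{z}=\{(\mathbf{x}_i,\mathbf{h}_i)\}_{i=1}^N$ with coordinates $\mathbf{x}_i\in\mathbb{R}^3$ and features $\mathbf{h}_i\in\mathbb{R}^d$; $\mathcal{Z}$ denotes the space of such configurations (of varying size $N$), viewed as points of $\mathbb{R}^{N\times(3+d)}$. Rigid transformations $G$ act on configurations by acting on all coordinates $\mathbf{x}_i$ (features unchanged). $\mathcal{S}$ is a general space of geometric objects (e.g. structures, surfaces, point clouds) on which rigid transformations also act. A map $F$ is equivariant to $G$ if $F(G\mathbf{z})=G\,F(\mathbf{z})$ and invariant if $F(G\mathbf{z})=F(\mathbf{z})$. *)

theory Defs
  imports "HOL-Analysis.Analysis"
begin

text \<open>A configuration of N nodes with coordinates in R^3 and features in R^d is an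
  element of (R^3 x R^d)^N, with the Euclidean (Frobenius) inner product; the node
  count N and the feature dimension d are finite index types.\<close>

definition rotation :: "real^3^3 \<Rightarrow> bool" where
  "rotation R \<longleftrightarrow> orthogonal_matrix R \<and> det R = 1"

definition act_cfg :: "real^3^3 \<Rightarrow> real^3 \<Rightarrow> ((real^3) \<times> (real^'d))^'n \<Rightarrow> ((real^3) \<times> (real^'d))^'n" where
  "act_cfg R t z = (\<chi> i. (R *v fst (z $ i) + t, snd (z $ i)))"

text \<open>Induced action on (co)tangent vectors, i.e. on gradients: the linear part only.\<close>
definition act_vec :: "real^3^3 \<Rightarrow> ((real^3) \<times> (real^'d))^'n \<Rightarrow> ((real^3) \<times> (real^'d))^'n" where
  "act_vec R g = (\<chi> i. (R *v fst (g $ i), snd (g $ i)))"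

definition has_gradient :: "('a::real_inner \<Rightarrow> real) \<Rightarrow> 'a \<Rightarrow> 'a \<Rightarrow> bool" where
  "has_gradient f g z \<longleftrightarrow> (f has_derivative (\<lambda>h. inner g h)) (at z)"

end

theory Submission
  imports Defs
begin

lemma act_vec_linear: "linear (act_vec R :: ((real^3) \<times> (real^'d))^'n \<Rightarrow> _)"
  by (rule linearI) (simp_all add: act_vec_def vec_eq_iff matrix_vector_right_distrib
        matrix_vector_mult_scaleR)

lemma act_vec_bl: "bounded_linear (act_vec R :: ((real^3) \<times> (real^'d))^'n \<Rightarrow> _)"
  using act_vec_linear linear_conv_bounded_linear by blast

lemma act_cfg_split: "act_cfg R t u = act_vec R u + act_cfg R t 0"
  by (simp add: act_cfg_def act_vec_def vec_eq_iff)

lemma act_cfg_diff: "act_cfg R t w - act_cfg R t v = act_vec R (w - v)"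
  by (simp add: act_cfg_def act_vec_def vec_eq_iff matrix_vector_mult_diff_distrib)

lemma act_vec_inner:
  assumes "orthogonal_matrix R"
  shows "inner (act_vec R u) (act_vec R v) = inner u v"
proof -
  have o: "orthogonal_transformation (\<lambda>x. R *v x)"
    using assms orthogonal_transformation_matrix[of "\<lambda>x. R *v x"]
    by (simp add: matrix_of_matrix_vector_mul matrix_vector_mul_linear)
  have "\<And>a b. inner (R *v a) (R *v b) = inner a b"
    using o unfolding orthogonal_transformation_def by blast
  then show ?thesis
    by (simp add: act_vec_def inner_vec_def inner_prod_def)
qed

lemma act_vec_norm:
  assumes "orthogonal_matrix R"
  shows "norm (act_vec R u) = norm u"
  using act_vec_inner[OF assms, of u u] by (simp add: norm_eq_sqrt_inner)

lemma act_vec_comp: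
  assumes "orthogonal_matrix R"
  shows "act_vec R (act_vec (transpose R) u) = u"
proof -
  have "R ** transpose R = mat 1" using assms by (simp add: orthogonal_matrix_def)
  then have h: "R *v (transpose R *v x) = x" for x by (simp add: matrix_vector_mul_assoc del: transpose_matrix_vector)
  then show ?thesis by (simp add: act_vec_def h del: transpose_matrix_vector)
qed

lemma act_cfg_inv:
  assumes "orthogonal_matrix R"
  shows "act_cfg (transpose R) (- (transpose R *v t)) (act_cfg R t w) = w"
proof -
  have "transpose R ** R = mat 1" using assms by (simp add: orthogonal_matrix_def)
  then have h: "transpose R *v (R *v x) = x" for x by (simp add: matrix_vector_mul_assoc del: transpose_matrix_vector)
  then show ?thesis by (simp add: act_cfg_def h matrix_vector_right_distrib
     del: transpose_matrix_vector)
qed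

lemma act_cfg_inv2:
  assumes "orthogonal_matrix R"
  shows "act_cfg R t (act_cfg (transpose R) (- (transpose R *v t)) w) = w"
proof -
  have "R ** transpose R = mat 1" using assms by (simp add: orthogonal_matrix_def)
  then have h: "R *v (transpose R *v x) = x" for x by (simp add: matrix_vector_mul_assoc del: transpose_matrix_vector)
  then show ?thesis by (simp add: act_cfg_def h matrix_vector_right_distrib
     matrix_vector_mult_diff_distrib del: transpose_matrix_vector)
qed

theorem theorem1:
  fixes C :: "'s \<Rightarrow> ((real^3) \<times> (real^'d))^'n \<Rightarrow> ((real^3) \<times> (real^'d))^'n"
    and act_S :: "real^3^3 \<Rightarrow> real^3 \<Rightarrow> 's \<Rightarrow> 's"
  assumes inv: "\<forall>R t s z. rotation R \<longrightarrow> C (act_S R t s) z = C s z"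
    and equiv: "\<forall>R t s z. rotation R \<longrightarrow> C s (act_cfg R t z) = act_cfg R t (C s z)"
  shows "\<forall>R t s z g. rotation R \<longrightarrow>
           has_gradient (\<lambda>w. (norm (w - C s w))\<^sup>2) g z \<longrightarrow>
           has_gradient (\<lambda>w. (norm (w - C s w))\<^sup>2) (act_vec R g) (act_cfg R t z)"
proof (intro allI impI)
  fix R t s z g
  assume rot: "rotation R" and hg: "has_gradient (\<lambda>w. (norm (w - C s w))\<^sup>2) g z"
  have om: "orthogonal_matrix R" using rot by (simp add: rotation_def)
  define f where "f = (\<lambda>w. (norm (w - C s w))\<^sup>2)"
  define Ti :: "((real^3) \<times> (real^'d))^'n \<Rightarrow> _" where "Ti = act_cfg (transpose R) (- (transpose R *v t))"
  have finv: "f (act_cfg R t w) = f w" for w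
    using equiv rot by (simp add: f_def act_cfg_diff act_vec_norm[OF om])
  have feq: "f = (\<lambda>u. f (Ti u))"
  proof
    fix u
    have "u = act_cfg R t (Ti u)"
      unfolding Ti_def by (rule act_cfg_inv2[OF om, symmetric])
    then show "f u = f (Ti u)" using finv by metis
  qed
  have dT: "(Ti has_derivative act_vec (transpose R)) (at (act_cfg R t z))"
  proof -
    have "Ti = (\<lambda>u. act_vec (transpose R) u + act_cfg (transpose R) (- (transpose R *v t)) 0)"
      unfolding Ti_def by (rule ext, rule act_cfg_split)
    then show ?thesis
      using bounded_linear_imp_has_derivative[OF act_vec_bl] has_derivative_add_const by metis
  qed
  have Tz: "Ti (act_cfg R t z) = z" unfolding Ti_def by (rule act_cfg_inv[OF om])
  have df: "(f has_derivative (\<lambda>h. inner g h)) (at z)" using hg by (simp add: has_gradient_def f_def)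
  have "((\<lambda>u. f (Ti u)) has_derivative (\<lambda>h. inner g (act_vec (transpose R) h))) (at (act_cfg R t z))"
    using has_derivative_compose[OF dT, of f "\<lambda>h. inner g h"] Tz df by simp
  moreover have "(\<lambda>h. inner g (act_vec (transpose R) h)) = (\<lambda>h. inner (act_vec R g) h)"
  proof
    fix h
    show "inner g (act_vec (transpose R) h) = inner (act_vec R g) h"
      using act_vec_inner[OF om, of g "act_vec (transpose R) h"] act_vec_comp[OF om, of h] by simp
  qed
  ultimately have "(f has_derivative (\<lambda>h. inner (act_vec R g) h)) (at (act_cfg R t z))"
    using feq by simp
  then show "has_gradient (\<lambda>w. (norm (w - C s w))\<^sup>2) (act_vec R g) (act_cfg R t z)"
    by (simp add: has_gradient_def f_def)
qed

end
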